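(* Let $A,A^*$ be a Leonard pair in $\mathcal A$. Then there exists a unique antiautomorphism $\dagger$ of $\mathcal A$ such that $A^\dagger=A$ and $A^{*\dagger}=A^*$. Moreover $X^{\dagger\dagger}=X$ for all $X\in\mathcal A$.
   Context: Let $\mathbb K$ be a field, $d\ge 0$ an integer, and $\mathcal A$ a $\mathbb K$-algebra isomorphic to $\mathrm{Mat}_{d+1}(\mathbb K)$; let $V$ be an irreducible left $\mathcal A$-module. A square matrix is tridiagonal if every nonzero entry lies on the diagonal, subdiagonal or superdiagonal; a tridiagonal matrix is irreducible if all subdiagonal and superdiagonal entries are nonzero. A Leonard pair in $\mathcal A$ is an ordered pair $A,A^*\in\mathcal A$ ($A^*$ is just a name, not an adjoint) such that (i) there is a basis of $V$ w.r.t. which the matrix of $A$ is irreducible tridiagonal and the matrix of $A^*$ is diagonal, and (ii) there is a basis of $V$ w.r.t. which the matrix of $A^*$ is irreducible tridiagonal and the matrix of $A$ is diagonal. An antiautomorphism of $\mathcal A$ is a $\mathbb K$-linear bijection $\sigma:\mathcal A\to\mathcal A$ with $(XY)^\sigma=Y^\sigma X^\sigma$ for all $X,Y\in\mathcal A$. *)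

theory Defs
  imports "Jordan_Normal_Form.Matrix"
begin

text \<open>We take the algebra to be Mat_n(K) with n = d+1 itself (every algebra isomorphic
  to it is handled by transport), and V = K^n its irreducible module (column vectors).
  A basis of V is encoded by an invertible matrix P whose columns are the basis vectors;
  the matrix of X w.r.t. that basis is P^{-1} X P.\<close>

definition tridiagonal :: "'a::zero mat \<Rightarrow> bool" where
  "tridiagonal M \<longleftrightarrow>
     (\<forall>i<dim_row M. \<forall>j<dim_col M. M $$ (i,j) \<noteq> 0 \<longrightarrow> i \<le> j + 1 \<and> j \<le> i + 1)"

definition irreducible_tridiagonal :: "'a::zero mat \<Rightarrow> bool" where
  "irreducible_tridiagonal M \<longleftrightarrow> dim_row M = dim_col M \<and> tridiagonal M \<and>
     (\<forall>i. i + 1 < dim_row M \<longrightarrow> M $$ (i+1,i) \<noteq> 0 \<and> M $$ (i,i+1) \<noteq> 0)"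

definition leonard_pair :: "nat \<Rightarrow> 'a::field mat \<Rightarrow> 'a mat \<Rightarrow> bool" where
  "leonard_pair n A As \<longleftrightarrow> A \<in> carrier_mat n n \<and> As \<in> carrier_mat n n \<and>
     (\<exists>P Pi. P \<in> carrier_mat n n \<and> Pi \<in> carrier_mat n n \<and> Pi * P = 1\<^sub>m n \<and> P * Pi = 1\<^sub>m n \<and>
        irreducible_tridiagonal (Pi * A * P) \<and> diagonal_mat (Pi * As * P)) \<and>
     (\<exists>P Pi. P \<in> carrier_mat n n \<and> Pi \<in> carrier_mat n n \<and> Pi * P = 1\<^sub>m n \<and> P * Pi = 1\<^sub>m n \<and>
        irreducible_tridiagonal (Pi * As * P) \<and> diagonal_mat (Pi * A * P))"

definition antiautomorphism :: "nat \<Rightarrow> ('a::field mat \<Rightarrow> 'a mat) \<Rightarrow> bool" where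
  "antiautomorphism n \<sigma> \<longleftrightarrow> bij_betw \<sigma> (carrier_mat n n) (carrier_mat n n) \<and>
     (\<forall>X\<in>carrier_mat n n. \<forall>Y\<in>carrier_mat n n. \<sigma> (X + Y) = \<sigma> X + \<sigma> Y) \<and>
     (\<forall>c. \<forall>X\<in>carrier_mat n n. \<sigma> (c \<cdot>\<^sub>m X) = c \<cdot>\<^sub>m \<sigma> X) \<and>
     (\<forall>X\<in>carrier_mat n n. \<forall>Y\<in>carrier_mat n n. \<sigma> (X * Y) = \<sigma> Y * \<sigma> X)"

end

theory Submission imports Defs begin

lemma mult_entry:
  assumes "A \<in> carrier_mat n k" "B \<in> carrier_mat k m" "i < n" "j < m"
  shows "(A * B) $$ (i,j) = (\<Sum>l<k. A $$ (i,l) * B $$ (l,j))"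
  using assms by (simp add: scalar_prod_def atLeast0LessThan)

lemma if_zero_times[simp]:
  "(if P then x else 0) * (y::'a::mult_zero) = (if P then x * y else 0)"
  "y * (if P then x else 0) = (if P then y * x else 0)" by auto

definition dg :: "nat \<Rightarrow> (nat \<Rightarrow> 'a::zero) \<Rightarrow> 'a mat" where
  "dg n f = mat n n (\<lambda>(i,j). if i = j then f i else 0)"

definition E :: "nat \<Rightarrow> nat \<Rightarrow> nat \<Rightarrow> 'a::{zero,one} mat" where
  "E n i j = mat n n (\<lambda>(a,b). if a = i \<and> b = j then 1 else 0)"

lemma dg_carrier[simp]: "dg n f \<in> carrier_mat n n" by (simp add: dg_def)
lemma E_carrier[simp]: "E n i j \<in> carrier_mat n n" by (simp add: E_def)
lemma dg_dims[simp]: "dim_row (dg n f) = n" "dim_col (dg n f) = n" by (simp_all add: dg_def)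
lemma E_dims[simp]: "dim_row (E n i j) = n" "dim_col (E n i j) = n" by (simp_all add: E_def)

lemma dg_mult_left:
  fixes f :: "nat \<Rightarrow> 'a::comm_ring_1"
  assumes "M \<in> carrier_mat n m" "a < n" "b < m"
  shows "(dg n f * M) $$ (a,b) = f a * M $$ (a,b)"
proof -
  have "(dg n f * M) $$ (a,b) = (\<Sum>l<n. (if a = l then f a * M $$ (l,b) else 0))"
    using assms by (subst mult_entry[of _ n n M m]) (auto simp: dg_def intro!: sum.cong split: if_split)
  also have "\<dots> = f a * M $$ (a,b)" using assms by simp
  finally show ?thesis .
qed

lemma dg_mult_right:
  fixes f :: "nat \<Rightarrow> 'a::comm_ring_1"
  assumes "M \<in> carrier_mat m n" "a < m" "b < n"
  shows "(M * dg n f) $$ (a,b) = M $$ (a,b) * f b"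
proof -
  have "(M * dg n f) $$ (a,b) = (\<Sum>l<n. (if l = b then M $$ (a,l) * f b else 0))"
    using assms by (subst mult_entry[of M m n _ n]) (auto simp: dg_def intro!: sum.cong split: if_split)
  also have "\<dots> = M $$ (a,b) * f b" using assms by simp
  finally show ?thesis .
qed

lemma E_mult_left:
  fixes M :: "'a::comm_ring_1 mat"
  assumes "M \<in> carrier_mat n m" "a < n" "b < m" "j < n"
  shows "(E n i j * M) $$ (a,b) = (if a = i then M $$ (j,b) else 0)"
proof -
  have "(E n i j * M) $$ (a,b) = (\<Sum>l<n. (if l = j then (if a = i then M $$ (j,b) else 0) else 0))"
    using assms by (subst mult_entry[of _ n n M m]) (auto simp: E_def intro!: sum.cong split: if_split)
  also have "\<dots> = (if a = i then M $$ (j,b) else 0)" using assms by simp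
  finally show ?thesis .
qed

lemma E_mult_right:
  fixes M :: "'a::comm_ring_1 mat"
  assumes "M \<in> carrier_mat m n" "a < m" "b < n" "i < n"
  shows "(M * E n i j) $$ (a,b) = (if b = j then M $$ (a,i) else 0)"
proof -
  have "(M * E n i j) $$ (a,b) = (\<Sum>l<n. (if l = i then (if b = j then M $$ (a,i) else 0) else 0))"
    using assms by (subst mult_entry[of M m n _ n]) (auto simp: E_def intro!: sum.cong split: if_split)
  also have "\<dots> = (if b = j then M $$ (a,i) else 0)" using assms by simp
  finally show ?thesis .
qed

lemma E_mult_E:
  assumes "j < n"
  shows "E n i j * E n j k = (E n i k :: 'a::comm_ring_1 mat)"
  by (rule eq_matI) (use assms in \<open>auto simp: E_mult_left[of _ n n] simp del: index_mult_mat, auto simp: E_def\<close>)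

lemma dg_mult_dg: "dg n f * dg n g = dg n (\<lambda>i. f i * (g i::'a::comm_ring_1))"
  by (rule eq_matI) (auto simp: dg_mult_left[of _ n n] simp del: index_mult_mat, auto simp: dg_def)

lemma gen:
  fixes S :: "'a::field mat set" and T D :: "'a mat"
  assumes add: "\<And>X Y. X \<in> S \<Longrightarrow> Y \<in> S \<Longrightarrow> X + Y \<in> S"
    and mul: "\<And>X Y. X \<in> S \<Longrightarrow> Y \<in> S \<Longrightarrow> X * Y \<in> S"
    and sm: "\<And>c X. X \<in> S \<Longrightarrow> c \<cdot>\<^sub>m X \<in> S"
    and one: "1\<^sub>m n \<in> S"
    and TS: "T \<in> S" and Tc: "T \<in> carrier_mat n n" and Tt: "irreducible_tridiagonal T"
    and DS: "D \<in> S" and Dc: "D \<in> carrier_mat n n" and Dd: "diagonal_mat D"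
    and dist: "\<And>i j. i < n \<Longrightarrow> j < n \<Longrightarrow> i \<noteq> j \<Longrightarrow> D $$ (i,i) \<noteq> D $$ (j,j)"
  shows "carrier_mat n n \<subseteq> S"
proof -
  define d where "d i = D $$ (i,i)" for i
  have Ddg: "D = dg n d"
    using Dc Dd by (intro eq_matI) (auto simp: dg_def d_def diagonal_mat_def)
  have shift: "dg n (\<lambda>m. d m - c) \<in> S" for c
  proof -
    have "dg n (\<lambda>m. d m - c) = D + (- c) \<cdot>\<^sub>m 1\<^sub>m n"
      using Dc by (intro eq_matI) (auto simp: Ddg dg_def)
    thus ?thesis using add sm one DS by simp
  qed
  have prodS: "finite K \<Longrightarrow> dg n (\<lambda>m. \<Prod>k\<in>K. d m - d k) \<in> S" for K
  proof (induction K rule: finite_induct)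
    case empty
    have "dg n (\<lambda>m. \<Prod>k\<in>{}. d m - d k) = 1\<^sub>m n" by (intro eq_matI) (auto simp: dg_def)
    then show ?case using one by simp
  next
    case (insert x F)
    have "dg n (\<lambda>m. \<Prod>k\<in>insert x F. d m - d k) = dg n (\<lambda>m. \<Prod>k\<in>F. d m - d k) * dg n (\<lambda>m. d m - d x)"
      using insert by (simp add: dg_mult_dg mult.commute)
    then show ?case using mul insert shift by simp
  qed
  have Eii: "E n i i \<in> S" if "i < n" for i
  proof -
    define K where "K = {0..<n} - {i}"
    define c where "c = (\<Prod>k\<in>K. d i - d k)"
    have c0: "c \<noteq> 0" unfolding c_def K_def using dist that by (auto simp: d_def)
    have "E n i i = (1 / c) \<cdot>\<^sub>m dg n (\<lambda>m. \<Prod>k\<in>K. d m - d k)"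
    proof (rule eq_matI)
      fix a b assume ab: "a < dim_row (1 / c \<cdot>\<^sub>m dg n (\<lambda>m. \<Prod>k\<in>K. d m - d k))"
        "b < dim_col (1 / c \<cdot>\<^sub>m dg n (\<lambda>m. \<Prod>k\<in>K. d m - d k))"
      hence "a < n" "b < n" by auto
      moreover have "a \<noteq> i \<Longrightarrow> (\<Prod>k\<in>K. d a - d k) = 0"
        using \<open>a < n\<close> unfolding K_def by (intro prod_zero) auto
      ultimately show "E n i i $$ (a, b) = (1 / c \<cdot>\<^sub>m dg n (\<lambda>m. \<Prod>k\<in>K. d m - d k)) $$ (a, b)"
        using c0 by (auto simp: E_def dg_def c_def)
    qed auto
    thus ?thesis using sm prodS[of K] K_def by simp
  qed
  have ETE: "E n i i * T * E n j j = T $$ (i,j) \<cdot>\<^sub>m E n i j" if "i < n" "j < n" for i j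
  proof (rule eq_matI)
    fix a b assume "a < dim_row (T $$ (i, j) \<cdot>\<^sub>m E n i j)" "b < dim_col (T $$ (i, j) \<cdot>\<^sub>m E n i j)"
    hence ab: "a < n" "b < n" by auto
    have c: "E n i i * T \<in> carrier_mat n n" using mult_carrier_mat[OF E_carrier Tc] by simp
    show "(E n i i * T * E n j j) $$ (a, b) = (T $$ (i, j) \<cdot>\<^sub>m E n i j) $$ (a, b)"
      using E_mult_right[OF c ab that(2), of j] E_mult_left[OF Tc ab(1) that(2) that(1)] ab
      by (auto simp: E_def)
  qed (use Tc in auto)
  have adj: "E n i j \<in> S" if "i < n" "j < n" "T $$ (i,j) \<noteq> 0" for i j
  proof -
    have "E n i j = (1 / T $$ (i,j)) \<cdot>\<^sub>m (E n i i * T * E n j j)"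
      using that by (simp add: ETE, intro eq_matI, auto simp: E_def)
    thus ?thesis using mul sm Eii TS that by metis
  qed
  have Tup: "T $$ (i, i+1) \<noteq> 0" "T $$ (i+1, i) \<noteq> 0" if "i + 1 < n" for i
    using Tt Tc that by (auto simp: irreducible_tridiagonal_def)
  have up: "\<forall>i. i + k < n \<longrightarrow> E n i (i+k) \<in> S \<and> E n (i+k) i \<in> S" for k
  proof (induction k)
    case 0 then show ?case using Eii by simp
  next
    case (Suc k)
    show ?case
    proof (intro allI impI)
      fix i assume "i + Suc k < n"
      hence "E n i (i+k) \<in> S" "E n (i+k) i \<in> S" "E n (i+k) (i + Suc k) \<in> S" "E n (i + Suc k) (i+k) \<in> S"
        using Suc adj Tup[of "i+k"] by auto
      moreover have "E n i (i + Suc k) = (E n i (i+k) * E n (i+k) (i + Suc k) :: 'a mat)"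
        "E n (i + Suc k) i = (E n (i + Suc k) (i+k) * E n (i+k) i :: 'a mat)"
        using \<open>i + Suc k < n\<close> by (simp_all add: E_mult_E[of "i+k" n])
      ultimately show "E n i (i + Suc k) \<in> S \<and> E n (i + Suc k) i \<in> S" using mul by metis
    qed
  qed
  have allE: "E n i j \<in> S" if "i < n" "j < n" for i j
  proof (cases "i \<le> j")
    case True
    then have "i + (j - i) = j" by simp
    then show ?thesis using up[of "j - i"] that by metis
  next
    case False
    then have "j + (i - j) = i" by simp
    then show ?thesis using up[of "i - j"] that by metis
  qed
  have supp: "finite F \<Longrightarrow> \<forall>X \<in> carrier_mat n n. (\<forall>i<n. \<forall>j<n. (i,j) \<notin> F \<longrightarrow> X $$ (i,j) = 0) \<longrightarrow> X \<in> S" for F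
  proof (induction F rule: finite_induct)
    case empty
    show ?case
    proof (intro ballI impI)
      fix X :: "'a mat" assume "X \<in> carrier_mat n n" "\<forall>i<n. \<forall>j<n. (i, j) \<notin> {} \<longrightarrow> X $$ (i, j) = 0"
      hence "X = 0 \<cdot>\<^sub>m 1\<^sub>m n" by (intro eq_matI) auto
      thus "X \<in> S" using sm one by simp
    qed
  next
    case (insert p F)
    obtain a b where p: "p = (a,b)" by fastforce
    show ?case
    proof (intro ballI impI)
      fix X :: "'a mat" assume X: "X \<in> carrier_mat n n" "\<forall>i<n. \<forall>j<n. (i, j) \<notin> insert p F \<longrightarrow> X $$ (i, j) = 0"
      define X' where "X' = mat n n (\<lambda>(i,j). if (i,j) = (a,b) then 0 else X $$ (i,j))"
      have X'S: "X' \<in> S" using insert.IH X unfolding X'_def p by auto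
      show "X \<in> S"
      proof (cases "a < n \<and> b < n")
        case True
        have "X = X' + X $$ (a,b) \<cdot>\<^sub>m E n a b"
          using X True by (intro eq_matI) (auto simp: X'_def E_def)
        then show ?thesis using add sm allE True X'S by metis
      next
        case False
        have "X = X'" using X False by (intro eq_matI) (auto simp: X'_def)
        then show ?thesis using X'S by simp
      qed
    qed
  qed
  show ?thesis
  proof
    fix X :: "'a mat" assume "X \<in> carrier_mat n n"
    thus "X \<in> S" using supp[of "{0..<n} \<times> {0..<n}"] by auto
  qed
qed

lemma cancel_left:
  fixes A B X :: "'a::semiring_1 mat"
  assumes "A \<in> carrier_mat n n" "B \<in> carrier_mat n n" "A * B = 1\<^sub>m n" "X \<in> carrier_mat n k"
  shows "A * (B * X) = X"
proof -
  have "(A * B) * X = A * (B * X)" by (rule assoc_mult_mat) (use assms in auto)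
  moreover have "(A * B) * X = X" unfolding assms(3) using assms(4) by simp
  ultimately show ?thesis by simp
qed

lemma assoc_n:
  fixes A B C :: "'a::semiring_1 mat"
  shows "A \<in> carrier_mat n n \<Longrightarrow> B \<in> carrier_mat n n \<Longrightarrow> C \<in> carrier_mat n n \<Longrightarrow> A * B * C = A * (B * C)"
  by (rule assoc_mult_mat)

lemma mc_n:
  fixes A B :: "'a::semiring_1 mat"
  shows "A \<in> carrier_mat n n \<Longrightarrow> B \<in> carrier_mat n n \<Longrightarrow> A * B \<in> carrier_mat n n"
  by (rule mult_carrier_mat)

lemma cancel_n:
  fixes A B X :: "'a::semiring_1 mat"
  shows "A * B = 1\<^sub>m n \<Longrightarrow> A \<in> carrier_mat n n \<Longrightarrow> B \<in> carrier_mat n n \<Longrightarrow> X \<in> carrier_mat n n \<Longrightarrow> A * (B * X) = X"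
  by (rule cancel_left)

lemma tri_kernel:
  fixes T :: "'a::field mat" and x :: "nat \<Rightarrow> 'a"
  assumes Tc: "T \<in> carrier_mat n n" and Tt: "irreducible_tridiagonal T"
    and eq: "\<And>r. r < n \<Longrightarrow> (\<Sum>k<n. T $$ (r,k) * x k) = lam * x r"
    and x0: "x 0 = 0"
  shows "\<And>r. r < n \<Longrightarrow> x r = 0"
proof -
  have "m < n \<longrightarrow> (\<forall>k\<le>m. x k = 0)" for m
  proof (induction m)
    case 0 then show ?case using x0 by simp
  next
    case (Suc m)
    show ?case
    proof
      assume m: "Suc m < n"
      with Suc have IH: "\<forall>k\<le>m. x k = 0" by simp
      have "(\<Sum>k<n. T $$ (m,k) * x k) = (\<Sum>k<n. if k = Suc m then T $$ (m, Suc m) * x (Suc m) else 0)"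
      proof (rule sum.cong)
        fix k assume k: "k \<in> {..<n}"
        show "T $$ (m,k) * x k = (if k = Suc m then T $$ (m, Suc m) * x (Suc m) else 0)"
        proof (cases "k \<le> m")
          case True then show ?thesis using IH by simp
        next
          case False
          show ?thesis
          proof (cases "k = Suc m")
            case False
            with \<open>\<not> k \<le> m\<close> have "\<not> k \<le> m + 1" by simp
            have "m < n" using m by simp
            have "T $$ (m,k) \<noteq> 0 \<longrightarrow> m \<le> k + 1 \<and> k \<le> m + 1" using Tt Tc k \<open>m < n\<close>
              unfolding irreducible_tridiagonal_def tridiagonal_def by auto
            hence "T $$ (m,k) = 0" using \<open>\<not> k \<le> m + 1\<close> by blast
            thus ?thesis using False by simp
          qed simp
        qed
      qed simp
      also have "\<dots> = T $$ (m, Suc m) * x (Suc m)" using m by simp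
      finally have "T $$ (m, Suc m) * x (Suc m) = 0" using eq[of m] m IH by simp
      moreover have "T $$ (m, Suc m) \<noteq> 0" using Tt Tc m unfolding irreducible_tridiagonal_def by auto
      ultimately have "x (Suc m) = 0" by simp
      thus "\<forall>k\<le>Suc m. x k = 0" using IH le_Suc_eq by auto
    qed
  qed
  thus "\<And>r. r < n \<Longrightarrow> x r = 0" by blast
qed

lemma diag_distinct:
  fixes As P Pi Q Qi :: "'a::field mat"
  assumes c: "As \<in> carrier_mat n n" "P \<in> carrier_mat n n" "Pi \<in> carrier_mat n n"
     "Q \<in> carrier_mat n n" "Qi \<in> carrier_mat n n"
    and inv: "Pi * P = 1\<^sub>m n" "P * Pi = 1\<^sub>m n" "Qi * Q = 1\<^sub>m n" "Q * Qi = 1\<^sub>m n"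
    and Tt: "irreducible_tridiagonal (Qi * As * Q)" and Dd: "diagonal_mat (Pi * As * P)"
    and ij: "i < n" "j < n" "i \<noteq> j"
  shows "(Pi * As * P) $$ (i,i) \<noteq> (Pi * As * P) $$ (j,j)"
proof
  assume same: "(Pi * As * P) $$ (i,i) = (Pi * As * P) $$ (j,j)"
  define D where "D = Pi * As * P"
  define T where "T = Qi * As * Q"
  define M where "M = Qi * P"
  define N where "N = Pi * Q"
  define lam where "lam = D $$ (i,i)"
  have Dc: "D \<in> carrier_mat n n" "T \<in> carrier_mat n n" "M \<in> carrier_mat n n" "N \<in> carrier_mat n n"
    using c by (auto simp: D_def T_def M_def N_def)
  have NM: "N * M = 1\<^sub>m n"
    unfolding N_def M_def using c inv by (simp add: assoc_n[where n=n] mc_n[where n=n] cancel_n[where n=n])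
  have TM: "T * M = M * D"
  proof -
    have "T * M = Qi * (As * P)" unfolding T_def M_def using c inv
      by (simp add: assoc_n[where n=n] mc_n[where n=n] cancel_n[where n=n])
    moreover have "M * D = Qi * (As * P)" unfolding D_def M_def using c inv
      by (simp add: assoc_n[where n=n] mc_n[where n=n] cancel_n[where n=n])
    ultimately show ?thesis by simp
  qed
  have coleq: "(\<Sum>k<n. T $$ (r,k) * M $$ (k,col)) = D $$ (col,col) * M $$ (r,col)"
    if "r < n" "col < n" for r col
  proof -
    have "(\<Sum>k<n. T $$ (r,k) * M $$ (k,col)) = (T * M) $$ (r,col)"
      using Dc that by (simp add: mult_entry[of T n n M n] del: index_mult_mat)
    also have "\<dots> = (M * D) $$ (r,col)" using TM by simp
    also have "\<dots> = (\<Sum>k<n. M $$ (r,k) * D $$ (k,col))"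
      using Dc that by (simp add: mult_entry[of M n n D n] del: index_mult_mat)
    also have "\<dots> = (\<Sum>k<n. if k = col then D $$ (col,col) * M $$ (r,col) else 0)"
      using Dd Dc that unfolding D_def[symmetric] diagonal_mat_def
      by (intro sum.cong) (auto simp: mult.commute)
    also have "\<dots> = D $$ (col,col) * M $$ (r,col)" using that by simp
    finally show ?thesis .
  qed
  have Tt': "irreducible_tridiagonal T" using Tt T_def by simp
  have Dd': "diagonal_mat D" using Dd D_def by simp
  define x where "x k = M $$ (0,j) * M $$ (k,i) - M $$ (0,i) * M $$ (k,j)" for k
  have n0: "0 < n" using ij by simp
  have "x r = 0" if "r < n" for r
  proof (rule tri_kernel[OF Dc(2) Tt', where lam=lam and x=x])
    fix r assume r: "r < n"
    have "(\<Sum>k<n. T $$ (r,k) * x k) = M $$ (0,j) * (\<Sum>k<n. T $$ (r,k) * M $$ (k,i))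
        - M $$ (0,i) * (\<Sum>k<n. T $$ (r,k) * M $$ (k,j))"
      unfolding x_def by (simp add: sum_distrib_left sum_subtractf algebra_simps)
    also have "\<dots> = lam * x r" using coleq[OF r ij(1)] coleq[OF r ij(2)] same
      unfolding x_def lam_def D_def by (simp add: algebra_simps)
    finally show "(\<Sum>k<n. T $$ (r,k) * x k) = lam * x r" .
  next
    show "x 0 = 0" unfolding x_def by simp
  qed (rule that)
  have Nx: "(\<Sum>k<n. N $$ (a,k) * x k) = M $$ (0,j) * (if a = i then 1 else 0) - M $$ (0,i) * (if a = j then 1 else 0)"
    if "a < n" for a
  proof -
    have "(\<Sum>k<n. N $$ (a,k) * x k) = M $$ (0,j) * (\<Sum>k<n. N $$ (a,k) * M $$ (k,i))
        - M $$ (0,i) * (\<Sum>k<n. N $$ (a,k) * M $$ (k,j))"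
      unfolding x_def by (simp add: sum_distrib_left sum_subtractf algebra_simps)
    also have "(\<Sum>k<n. N $$ (a,k) * M $$ (k,i)) = (N * M) $$ (a,i)"
      using Dc that ij by (simp add: mult_entry[of N n n M n] del: index_mult_mat)
    also have "(\<Sum>k<n. N $$ (a,k) * M $$ (k,j)) = (N * M) $$ (a,j)"
      using Dc that ij by (simp add: mult_entry[of N n n M n] del: index_mult_mat)
    finally show ?thesis using NM that ij by simp
  qed
  have "(\<Sum>k<n. N $$ (a,k) * x k) = 0" for a
    using \<open>\<And>r. r < n \<Longrightarrow> x r = 0\<close> by simp
  hence M0: "M $$ (0,j) = 0" "M $$ (0,i) = 0" using Nx[OF ij(1)] Nx[OF ij(2)] ij by auto
  have Mi: "M $$ (r,i) = 0" if "r < n" for r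
  proof (rule tri_kernel[OF Dc(2) Tt', where lam="D $$ (i,i)" and x="\<lambda>k. M $$ (k,i)"])
    fix r assume r: "r < n"
    show "(\<Sum>k<n. T $$ (r,k) * M $$ (k,i)) = D $$ (i,i) * M $$ (r,i)" using coleq[OF r ij(1)] .
  qed (use M0 that in simp_all)
  have "(N * M) $$ (i,i) = (\<Sum>k<n. N $$ (i,k) * M $$ (k,i))"
    using Dc ij by (simp add: mult_entry[of N n n M n] del: index_mult_mat)
  also have "\<dots> = 0" using Mi by simp
  finally show False using NM ij by simp
qed

lemma one_right_n: "X \<in> carrier_mat n n \<Longrightarrow> X * 1\<^sub>m n = (X :: 'a::semiring_1 mat)" by simp
lemma one_left_n: "X \<in> carrier_mat n n \<Longrightarrow> 1\<^sub>m n * X = (X :: 'a::semiring_1 mat)" by simp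
lemma trans_n: "A \<in> carrier_mat n n \<Longrightarrow> B \<in> carrier_mat n n \<Longrightarrow> transpose_mat (A * B) = transpose_mat B * transpose_mat (A :: 'a::comm_semiring_1 mat)"
  by (rule transpose_mult)
lemma addl_n: "A \<in> carrier_mat n n \<Longrightarrow> B \<in> carrier_mat n n \<Longrightarrow> C \<in> carrier_mat n n \<Longrightarrow> (A + B) * C = A * C + B * (C :: 'a::semiring_1 mat)"
  by (rule add_mult_distrib_mat)
lemma addr_n: "A \<in> carrier_mat n n \<Longrightarrow> B \<in> carrier_mat n n \<Longrightarrow> C \<in> carrier_mat n n \<Longrightarrow> A * (B + C) = A * B + A * (C :: 'a::semiring_1 mat)"
  by (rule mult_add_distrib_mat)
lemma add_n: "A \<in> carrier_mat n n \<Longrightarrow> B \<in> carrier_mat n n \<Longrightarrow> A + B \<in> carrier_mat n n" by simp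
lemma sml_n: "A \<in> carrier_mat n n \<Longrightarrow> B \<in> carrier_mat n n \<Longrightarrow> (c \<cdot>\<^sub>m A) * B = c \<cdot>\<^sub>m (A * (B :: 'a::comm_semiring_1 mat))"
  by (rule mult_smult_assoc_mat)
lemma smr_n: "A \<in> carrier_mat n n \<Longrightarrow> B \<in> carrier_mat n n \<Longrightarrow> A * (c \<cdot>\<^sub>m B) = c \<cdot>\<^sub>m (A * (B :: 'a::comm_semiring_1 mat))"
  by (rule mult_smult_distrib)
lemma trans_add: "A \<in> carrier_mat n n \<Longrightarrow> B \<in> carrier_mat n n \<Longrightarrow> transpose_mat (A + B) = transpose_mat A + transpose_mat B"
  by (rule transpose_add)
lemma trans_sm: "transpose_mat (c \<cdot>\<^sub>m A) = c \<cdot>\<^sub>m transpose_mat A"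
  by (rule eq_matI) auto

lemmas nsimps = assoc_n mc_n cancel_n one_right_n one_left_n trans_n addl_n addr_n add_n sml_n smr_n trans_add

lemma construct:
  fixes P Pi H Hi :: "'a::field mat"
  assumes c: "P \<in> carrier_mat n n" "Pi \<in> carrier_mat n n" "H \<in> carrier_mat n n" "Hi \<in> carrier_mat n n"
    and inv: "Pi * P = 1\<^sub>m n" "P * Pi = 1\<^sub>m n" "H * Hi = 1\<^sub>m n" "Hi * H = 1\<^sub>m n"
    and tr: "transpose_mat H = H" "transpose_mat Hi = Hi"
  defines "\<sigma> \<equiv> \<lambda>X. P * (Hi * (transpose_mat (Pi * X * P) * (H * Pi)))"
  shows "antiautomorphism n \<sigma>" "\<forall>X\<in>carrier_mat n n. \<sigma> (\<sigma> X) = X"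
proof -
  have cl: "\<sigma> X \<in> carrier_mat n n" if "X \<in> carrier_mat n n" for X
    unfolding \<sigma>_def using c that by (simp add: nsimps[where n=n])
  have inv2: "\<sigma> (\<sigma> X) = X" if "X \<in> carrier_mat n n" for X
    unfolding \<sigma>_def using c that inv tr by (simp add: nsimps[where n=n])
  show "\<forall>X\<in>carrier_mat n n. \<sigma> (\<sigma> X) = X" using inv2 by blast
  have "bij_betw \<sigma> (carrier_mat n n) (carrier_mat n n)"
    by (rule bij_betw_byWitness[where f'=\<sigma>]) (use inv2 cl in auto)
  moreover have "\<forall>X\<in>carrier_mat n n. \<forall>Y\<in>carrier_mat n n. \<sigma> (X + Y) = \<sigma> X + \<sigma> Y"
    unfolding \<sigma>_def using c by (simp add: nsimps[where n=n])
  moreover have "\<forall>a. \<forall>X\<in>carrier_mat n n. \<sigma> (a \<cdot>\<^sub>m X) = a \<cdot>\<^sub>m \<sigma> X"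
    unfolding \<sigma>_def using c by (simp add: nsimps[where n=n] trans_sm)
  moreover have "\<forall>X\<in>carrier_mat n n. \<forall>Y\<in>carrier_mat n n. \<sigma> (X * Y) = \<sigma> Y * \<sigma> X"
  proof -
    have "transpose_mat Pi * transpose_mat P = 1\<^sub>m n"
      using c inv trans_n[of P n Pi] by simp
    then show ?thesis unfolding \<sigma>_def using c inv by (simp add: nsimps[where n=n])
  qed
  ultimately show "antiautomorphism n \<sigma>" unfolding antiautomorphism_def by blast
qed

lemma anti_one:
  fixes \<tau> :: "'a::field mat \<Rightarrow> 'a mat"
  assumes "antiautomorphism n \<tau>"
  shows "\<tau> (1\<^sub>m n) = 1\<^sub>m n"
proof -
  have bij: "bij_betw \<tau> (carrier_mat n n) (carrier_mat n n)" and
    mul: "\<And>X Y. X \<in> carrier_mat n n \<Longrightarrow> Y \<in> carrier_mat n n \<Longrightarrow> \<tau> (X * Y) = \<tau> Y * \<tau> X"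
    using assms unfolding antiautomorphism_def by auto
  obtain Z where Z: "Z \<in> carrier_mat n n" "\<tau> Z = 1\<^sub>m n"
    using bij one_carrier_mat unfolding bij_betw_def by (metis imageE)
  have c1: "\<tau> (1\<^sub>m n) \<in> carrier_mat n n" using bij unfolding bij_betw_def by auto
  have "\<tau> (1\<^sub>m n) = \<tau> (1\<^sub>m n) * 1\<^sub>m n" using c1 by simp
  also have "\<dots> = \<tau> (1\<^sub>m n) * \<tau> Z" using Z by simp
  also have "\<dots> = \<tau> (Z * 1\<^sub>m n)" using mul[of Z "1\<^sub>m n"] Z by simp
  also have "\<dots> = 1\<^sub>m n" using Z by simp
  finally show ?thesis .
qed

primrec hseq :: "'a::field mat \<Rightarrow> nat \<Rightarrow> 'a" where
  "hseq T 0 = 1"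
| "hseq T (Suc i) = hseq T i * T $$ (i, Suc i) / T $$ (Suc i, i)"

lemma hseq_nz:
  assumes "T \<in> carrier_mat n n" "irreducible_tridiagonal T"
  shows "i < n \<Longrightarrow> hseq T i \<noteq> 0"
proof (induction i)
  case (Suc i)
  then show ?case using assms unfolding irreducible_tridiagonal_def by auto
qed simp

lemma hseq_sym:
  assumes Tc: "T \<in> carrier_mat n n" and Tt: "irreducible_tridiagonal T" and ij: "i < n" "j < n"
  shows "hseq T i * T $$ (i,j) = hseq T j * T $$ (j,i)"
proof -
  have tri: "T $$ (a,b) = 0" if "a < n" "b < n" "\<not> (a \<le> b + 1 \<and> b \<le> a + 1)" for a b
    using Tt Tc that unfolding irreducible_tridiagonal_def tridiagonal_def by auto
  have nz: "T $$ (Suc a, a) \<noteq> 0" if "Suc a < n" for a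
    using Tt Tc that unfolding irreducible_tridiagonal_def by auto
  consider "j = Suc i" | "i = Suc j" | "i = j" | "\<not> (i \<le> j + 1 \<and> j \<le> i + 1)" by linarith
  then show ?thesis
  proof cases
    case 1 then show ?thesis using nz[of i] ij by simp
  next
    case 2 then show ?thesis using nz[of j] ij by simp
  next
    case 3 then show ?thesis by simp
  next
    case 4 then show ?thesis using tri[of i j] tri[of j i] ij by auto
  qed
qed

lemma dg_transpose: "transpose_mat (dg n f) = dg n f"
  by (rule eq_matI) (auto simp: dg_def)

theorem theorem5p8:
  fixes d :: nat and A As :: "'a::field mat"
  assumes "leonard_pair (d + 1) A As"
  shows "\<exists>\<sigma>. antiautomorphism (d + 1) \<sigma> \<and> \<sigma> A = A \<and> \<sigma> As = As \<and>
           (\<forall>\<tau>. antiautomorphism (d + 1) \<tau> \<and> \<tau> A = A \<and> \<tau> As = As \<longrightarrow>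
                 (\<forall>X\<in>carrier_mat (d + 1) (d + 1). \<tau> X = \<sigma> X)) \<and>
           (\<forall>X\<in>carrier_mat (d + 1) (d + 1). \<sigma> (\<sigma> X) = X)"
proof -
  define n where "n = d + 1"
  have Ac: "A \<in> carrier_mat n n" and Asc: "As \<in> carrier_mat n n"
    using assms unfolding leonard_pair_def n_def by auto
  obtain P Pi where P: "P \<in> carrier_mat n n" "Pi \<in> carrier_mat n n" "Pi * P = 1\<^sub>m n" "P * Pi = 1\<^sub>m n"
    and Tt: "irreducible_tridiagonal (Pi * A * P)" and Dd: "diagonal_mat (Pi * As * P)"
    using assms unfolding leonard_pair_def n_def by blast
  obtain Q Qi where Q: "Q \<in> carrier_mat n n" "Qi \<in> carrier_mat n n" "Qi * Q = 1\<^sub>m n" "Q * Qi = 1\<^sub>m n"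
    and Tt2: "irreducible_tridiagonal (Qi * As * Q)"
    using assms unfolding leonard_pair_def n_def by blast
  define T where "T = Pi * A * P"
  define D where "D = Pi * As * P"
  have Tc: "T \<in> carrier_mat n n" and Dc: "D \<in> carrier_mat n n"
    unfolding T_def D_def using P Ac Asc by auto
  have Tt': "irreducible_tridiagonal T" using Tt T_def by simp
  have Dd': "diagonal_mat D" using Dd D_def by simp
  have dist: "D $$ (i,i) \<noteq> D $$ (j,j)" if "i < n" "j < n" "i \<noteq> j" for i j
    unfolding D_def by (rule diag_distinct[OF Asc P(1,2) Q(1,2) P(3,4) Q(3,4) Tt2 Dd that])
  define h where "h = hseq T"
  have hnz: "i < n \<Longrightarrow> h i \<noteq> 0" for i unfolding h_def by (rule hseq_nz[OF Tc Tt'])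
  define H where "H = dg n h"
  define Hi where "Hi = dg n (\<lambda>i. inverse (h i))"
  have Hc: "H \<in> carrier_mat n n" "Hi \<in> carrier_mat n n" unfolding H_def Hi_def by auto
  have HHi: "H * Hi = 1\<^sub>m n" "Hi * H = 1\<^sub>m n"
    unfolding H_def Hi_def dg_mult_dg by (rule eq_matI; auto simp: dg_def hnz)+
  have Htr: "transpose_mat H = H" "transpose_mat Hi = Hi" unfolding H_def Hi_def by (rule dg_transpose)+
  define \<sigma> where "\<sigma> = (\<lambda>X. P * (Hi * (transpose_mat (Pi * X * P) * (H * Pi))))"
  have anti: "antiautomorphism n \<sigma>" and invol: "\<forall>X\<in>carrier_mat n n. \<sigma> (\<sigma> X) = X"
    using construct[OF P(1,2) Hc P(3,4) HHi Htr] unfolding \<sigma>_def by auto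
  have conj: "P * (Pi * X * P) * Pi = X" if "X \<in> carrier_mat n n" for X
    using P that by (simp add: nsimps[where n=n])
  have sig_conj: "\<sigma> X = P * (Hi * (transpose_mat (Pi * X * P) * H)) * Pi" if "X \<in> carrier_mat n n" for X
    unfolding \<sigma>_def using P Hc that by (simp add: nsimps[where n=n])
  have HT: "Hi * (transpose_mat T * H) = T"
  proof (rule eq_matI)
    fix a b assume ab: "a < dim_row T" "b < dim_col T"
    hence ab': "a < n" "b < n" using Tc by auto
    have "(Hi * (transpose_mat T * H)) $$ (a,b) = inverse (h a) * (T $$ (b,a) * h b)"
      unfolding Hi_def H_def using Tc ab'
      by (simp add: dg_mult_left[of _ n n] dg_mult_right[of _ n n] mc_n del: index_mult_mat)
    also have "\<dots> = T $$ (a,b)"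
      using hseq_sym[OF Tc Tt' ab'] hnz[OF ab'(1)] unfolding h_def
      by (simp add: field_simps)
    finally show "(Hi * (transpose_mat T * H)) $$ (a,b) = T $$ (a,b)" .
  qed (use Tc Hc in auto)
  have DD: "Hi * (transpose_mat D * H) = D"
  proof (rule eq_matI)
    fix a b assume ab: "a < dim_row D" "b < dim_col D"
    hence ab': "a < n" "b < n" using Dc by auto
    have "(Hi * (transpose_mat D * H)) $$ (a,b) = inverse (h a) * (D $$ (b,a) * h b)"
      unfolding Hi_def H_def using Dc ab'
      by (simp add: dg_mult_left[of _ n n] dg_mult_right[of _ n n] mc_n del: index_mult_mat)
    also have "\<dots> = D $$ (a,b)"
      using Dd Dc ab' hnz[OF ab'(1)] unfolding D_def[symmetric] diagonal_mat_def
      by (cases "a = b") auto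
    finally show "(Hi * (transpose_mat D * H)) $$ (a,b) = D $$ (a,b)" .
  qed (use Dc Hc in auto)
  have sA: "\<sigma> A = A" using sig_conj[OF Ac] HT conj[OF Ac] unfolding T_def by simp
  have sAs: "\<sigma> As = As" using sig_conj[OF Asc] DD conj[OF Asc] unfolding D_def by simp
  have uniq: "\<forall>X\<in>carrier_mat n n. \<tau> X = \<sigma> X" if tau: "antiautomorphism n \<tau>" "\<tau> A = A" "\<tau> As = As" for \<tau>
  proof -
    have t: "\<tau> X \<in> carrier_mat n n" "\<sigma> X \<in> carrier_mat n n" if "X \<in> carrier_mat n n" for X
      using tau(1) anti that unfolding antiautomorphism_def bij_betw_def by auto
    define S where "S = {Y \<in> carrier_mat n n. \<tau> (P * Y * Pi) = \<sigma> (P * Y * Pi)}"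
    have gc: "P * Y * Pi \<in> carrier_mat n n" if "Y \<in> carrier_mat n n" for Y using P that by auto
    have "carrier_mat n n \<subseteq> S"
    proof (rule gen[OF _ _ _ _ _ Tc Tt' _ Dc Dd' dist])
      fix X Y assume XY: "X \<in> S" "Y \<in> S"
      hence c: "X \<in> carrier_mat n n" "Y \<in> carrier_mat n n" unfolding S_def by auto
      have "P * (X + Y) * Pi = P * X * Pi + P * Y * Pi" using P c by (simp add: nsimps[where n=n])
      thus "X + Y \<in> S" using XY c gc[OF c(1)] gc[OF c(2)] tau(1) anti
        unfolding S_def antiautomorphism_def by auto
    next
      fix X Y assume XY: "X \<in> S" "Y \<in> S"
      hence c: "X \<in> carrier_mat n n" "Y \<in> carrier_mat n n" unfolding S_def by auto
      have "P * (X * Y) * Pi = (P * X * Pi) * (P * Y * Pi)" using P c by (simp add: nsimps[where n=n])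
      thus "X * Y \<in> S" using XY c gc[OF c(1)] gc[OF c(2)] tau(1) anti
        unfolding S_def antiautomorphism_def by auto
    next
      fix a X assume XY: "X \<in> S"
      hence c: "X \<in> carrier_mat n n" unfolding S_def by auto
      have "P * (a \<cdot>\<^sub>m X) * Pi = a \<cdot>\<^sub>m (P * X * Pi)" using P c by (simp add: nsimps[where n=n])
      thus "a \<cdot>\<^sub>m X \<in> S" using XY c gc[OF c(1)] tau(1) anti
        unfolding S_def antiautomorphism_def by auto
    next
      have "P * 1\<^sub>m n * Pi = 1\<^sub>m n" using P by simp
      thus "1\<^sub>m n \<in> S" unfolding S_def using anti_one[OF tau(1)] anti_one[OF anti] by simp
    next
      have "P * T * Pi = A" using conj[OF Ac] T_def by simp
      thus "T \<in> S" unfolding S_def using Tc tau sA by simp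
    next
      have "P * D * Pi = As" using conj[OF Asc] D_def by simp
      thus "D \<in> S" unfolding S_def using Dc tau sAs by simp
    qed
    show ?thesis
    proof
      fix X :: "'a mat" assume X: "X \<in> carrier_mat n n"
      have "Pi * X * P \<in> S" using \<open>carrier_mat n n \<subseteq> S\<close> P X by auto
      thus "\<tau> X = \<sigma> X" unfolding S_def using conj[OF X] by simp
    qed
  qed
  show ?thesis unfolding n_def[symmetric]
    using anti sA sAs uniq invol by blast
qed

end
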